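(* Consider a radial three-phase distribution grid on buses $\{0,\ldots,N\}$ (feeder bus $0$, each bus $n\geq1$ with parent $\pi_n<n$, line $n$ joining $\pi_n$ and $n$), with symmetric phase impedance matrices $\mathbf{Z}_n=\mathbf{Z}_n^{\top}\in\mathbb{C}^{3\times3}$ having entries $z_n^{ij}=r_n^{ij}+jx_n^{ij}$. Let $\mathbf{X}:=2\mathbf{M}\,\mathrm{bdiag}(\{\mathrm{Im}[\tilde{\mathbf{Z}}_n]\})\mathbf{M}^{\top}$ and $\mathbf{R}:=2\mathbf{M}\,\mathrm{bdiag}(\{\mathrm{Re}[\tilde{\mathbf{Z}}_n]\})\mathbf{M}^{\top}$, and let $\mathbf{X}_x:=2\mathbf{M}\,\mathrm{bdiag}(\{\tilde{\mathbf{X}}_n\})\mathbf{M}^{\top}$, where \[\tilde{\mathbf{X}}_n:=\frac12\begin{bmatrix}2x_n^{11}&-x_n^{12}&-x_n^{13}\\-x_n^{12}&2x_n^{22}&-x_n^{23}\\-x_n^{13}&-x_n^{23}&2x_n^{33}\end{bmatrix}.\] Fix $\mathbf{p}\in\mathbb{R}^{3N}$ and $v_0$, and let $\mathbf{v}(\mathbf{q}):=\mathbf{R}\mathbf{p}+\mathbf{X}\mathbf{q}+v_0\mathbf{1}_{3N}$. Starting from any $\mathbf{q}^0\in\mathbb{R}^{3N}$, consider $\mathbf{q}^{t+1}=\mathbf{q}^t-\mu(\mathbf{v}^t-v_0\mathbf{1}_{3N})$ with $\mathbf{v}^t:=\mathbf{v}(\mathbf{q}^t)$. If $\mu\in\left(0,\frac{2\lambda_{\min}(\mathbf{X}_x)}{\lambda_{\max}(\mathbf{X}^{\top}\mathbf{X})}\right)$,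 then $\mathbf{q}^t$ converges to the minimizer of $\min_{\mathbf{q}\in\mathbb{R}^{3N}}\tfrac12\|\mathbf{R}\mathbf{p}+\mathbf{X}\mathbf{q}\|_2^2$.
   Context: $\tilde{\mathbf{Z}}_n:=\operatorname{diag}(\boldsymbol{\alpha}^* )\mathbf{Z}_n\operatorname{diag}(\boldsymbol{\alpha})$ with $\boldsymbol{\alpha}:=[1~\alpha~\alpha^2]^{\top}$, $\alpha=e^{-j2\pi/3}$; $^*$ is entrywise conjugation, $\mathrm{Re},\mathrm{Im}$ are entrywise. $\mathbf{M}:=\mathbf{T}(\mathbf{I}_3\otimes\mathbf{F})\mathbf{T}^{\top}$, where: the full branch-bus incidence matrix $\tilde{\mathbf{A}}=[\mathbf{a}_0~\mathbf{A}]\in\mathbb{R}^{N\times(N+1)}$ has in row $n$ entry $+1$ at column $\pi_n$, $-1$ at column $n$, zeros elsewhere; $\mathbf{A}$ is the reduced incidence matrix (column of bus $0$ removed); $\mathbf{F}:=-\mathbf{A}^{-1}$; $\mathbf{T}:=[\mathbf{I}_3\otimes\mathbf{e}_1^{\top};\ldots;\mathbf{I}_3\otimes\mathbf{e}_N^{\top}]\in\mathbb{R}^{3N\times3N}$ (blocks stacked vertically) with $\mathbf{e}_n$ the $n$-th column of $\mathbf{I}_N$. $\mathrm{bdiag}(\{\mathbf{Y}_n\})$ is block diagonal with blocks $\mathbf{Y}_1,\ldots,\mathbf{Y}_N$. $\lambda_{\min},\lambda_{\max}$ denote smallest/largest eigenvalues of symmetric matrices. *)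

theory Defs
  imports "Jordan_Normal_Form.Gauss_Jordan_Elimination" "Jordan_Normal_Form.Char_Poly"
begin

definition kron :: "'a::times mat \<Rightarrow> 'a mat \<Rightarrow> 'a mat" where
  "kron A B = mat (dim_row A * dim_row B) (dim_col A * dim_col B)
     (\<lambda>(r,c). A $$ (r div dim_row B, c div dim_col B) * B $$ (r mod dim_row B, c mod dim_col B))"

(* full branch-bus incidence matrix, N x (N+1); row n-1 <-> line n, column b <-> bus b *)
definition inc_full :: "nat \<Rightarrow> (nat \<Rightarrow> nat) \<Rightarrow> real mat" where
  "inc_full N par = mat N (N+1) (\<lambda>(r,c). if c = par (r+1) then 1 else if c = r+1 then -1 else 0)"

definition inc_red :: "nat \<Rightarrow> (nat \<Rightarrow> nat) \<Rightarrow> real mat" where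
  "inc_red N par = mat N N (\<lambda>(r,c). inc_full N par $$ (r, c+1))"

definition Fmat :: "nat \<Rightarrow> (nat \<Rightarrow> nat) \<Rightarrow> real mat" where
  "Fmat N par = - the (mat_inverse (inc_red N par))"

(* T = [I3 (x) e_1^T; ...; I3 (x) e_N^T] *)
definition Tmat :: "nat \<Rightarrow> real mat" where
  "Tmat N = mat (3*N) (3*N)
     (\<lambda>(r,c). (kron (1\<^sub>m 3) (mat_of_row (unit_vec N (r div 3)))) $$ (r mod 3, c))"

definition Mmat :: "nat \<Rightarrow> (nat \<Rightarrow> nat) \<Rightarrow> real mat" where
  "Mmat N par = Tmat N * kron (1\<^sub>m 3) (Fmat N par) * transpose_mat (Tmat N)"

definition bdiag :: "nat \<Rightarrow> (nat \<Rightarrow> real mat) \<Rightarrow> real mat" where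
  "bdiag N Y = mat (3*N) (3*N)
     (\<lambda>(r,c). if r div 3 = c div 3 then Y (r div 3 + 1) $$ (r mod 3, c mod 3) else 0)"

definition alpha :: complex where
  "alpha = cis (- 2 * pi / 3)"

definition Ztilde :: "complex mat \<Rightarrow> complex mat" where
  "Ztilde Z = mat_diag 3 (\<lambda>i. cnj (alpha ^ i)) * Z * mat_diag 3 (\<lambda>i. alpha ^ i)"

definition Xtilde :: "complex mat \<Rightarrow> real mat" where
  "Xtilde Z = mat 3 3 (\<lambda>(i,j). if i = j then Im (Z $$ (i,i)) else - Im (Z $$ (i,j)) / 2)"

definition lambda_min :: "real mat \<Rightarrow> real" where
  "lambda_min A = Min {k. eigenvalue A k}"

definition lambda_max :: "real mat \<Rightarrow> real" where
  "lambda_max A = Max {k. eigenvalue A k}"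

end

theory Submission imports Defs begin
declare minus_carrier_mat[simp]

lemma quad_expand:
  fixes A :: "real mat"
  assumes A: "A \<in> carrier_mat n n" and e: "e \<in> carrier_vec n" and y: "y \<in> carrier_vec n"
  shows "y \<bullet> (A *\<^sub>v e) = (\<Sum>i<n. \<Sum>j<n. A $$ (i,j) * y $ i * e $ j)"
proof -
  have r: "(A *\<^sub>v e) $ i = (\<Sum>j<n. A $$ (i,j) * e $ j)" if "i < n" for i
  proof -
    have "(A *\<^sub>v e) $ i = row A i \<bullet> e" using A that by simp
    also have "\<dots> = (\<Sum>j<n. A $$ (i,j) * e $ j)"
      using A e that by (simp add: scalar_prod_def row_def lessThan_atLeast0)
    finally show ?thesis .
  qed
  have "y \<bullet> (A *\<^sub>v e) = (\<Sum>i<n. y $ i * (\<Sum>j<n. A $$ (i,j) * e $ j))"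
    using A e y r unfolding scalar_prod_def[of y]
    by (auto simp: lessThan_atLeast0 intro!: sum.cong)
  also have "\<dots> = (\<Sum>i<n. \<Sum>j<n. A $$ (i,j) * y $ i * e $ j)"
    by (simp add: sum_distrib_left algebra_simps)
  finally show ?thesis .
qed

lemma sq_le_norm:
  fixes e :: "real vec"
  assumes e: "e \<in> carrier_vec n" and i: "i < n"
  shows "(e $ i)^2 \<le> e \<bullet> e"
proof -
  have "e \<bullet> e = (\<Sum>k\<in>{0..<n}. (e $ k)^2)" using e unfolding scalar_prod_def
    by (simp add: power2_eq_square)
  moreover have "(e $ i)^2 \<le> (\<Sum>k\<in>{0..<n}. (e $ k)^2)"
    by (rule member_le_sum[of i "{0..<n}" "\<lambda>k. (e $ k)^2", simplified]) (use i in auto)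
  ultimately show ?thesis by simp
qed

lemma quad_bound:
  fixes A :: "real mat"
  assumes A: "A \<in> carrier_mat n n" and e: "e \<in> carrier_vec n"
  shows "\<bar>e \<bullet> (A *\<^sub>v e)\<bar> \<le> (\<Sum>i<n. \<Sum>j<n. \<bar>A $$ (i,j)\<bar>) * (e \<bullet> e)"
proof -
  have b: "\<bar>e $ i * e $ j\<bar> \<le> e \<bullet> e" if "i < n" "j < n" for i j
  proof -
    have "\<bar>e $ i * e $ j\<bar> \<le> ((e $ i)^2 + (e $ j)^2) / 2"
    proof -
      have "0 \<le> (\<bar>e $ i\<bar> - \<bar>e $ j\<bar>)^2" by simp
      thus ?thesis by (simp add: power2_eq_square abs_mult algebra_simps)
    qed
    also have "\<dots> \<le> (e \<bullet> e + e \<bullet> e) / 2"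
      by (intro divide_right_mono add_mono sq_le_norm[OF e] that) auto
    finally show ?thesis by simp
  qed
  have "\<bar>e \<bullet> (A *\<^sub>v e)\<bar> = \<bar>\<Sum>i<n. \<Sum>j<n. A $$ (i,j) * e $ i * e $ j\<bar>"
    using quad_expand[OF A e e] by simp
  also have "\<dots> \<le> (\<Sum>i<n. \<Sum>j<n. \<bar>A $$ (i,j) * e $ i * e $ j\<bar>)"
    by (rule order_trans[OF sum_abs]) (intro sum_mono sum_abs)
  also have "\<dots> \<le> (\<Sum>i<n. \<Sum>j<n. \<bar>A $$ (i,j)\<bar> * (e \<bullet> e))"
    by (intro sum_mono) (auto simp: abs_mult mult.assoc intro!: mult_left_mono b[unfolded abs_mult])
  also have "\<dots> = (\<Sum>i<n. \<Sum>j<n. \<bar>A $$ (i,j)\<bar>) * (e \<bullet> e)"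
    by (simp add: sum_distrib_right)
  finally show ?thesis .
qed

lemma finite_eigenvalues:
  fixes A :: "real mat"
  assumes A: "A \<in> carrier_mat n n"
  shows "finite {k. eigenvalue A k}"
proof -
  have "char_poly A \<noteq> 0" using degree_monic_char_poly[OF A] by auto
  hence "finite {k. poly (char_poly A) k = 0}" by (rule poly_roots_finite)
  thus ?thesis using eigenvalue_root_char_poly[OF A] by simp
qed

lemma mv_index:
  fixes A :: "real mat"
  assumes A: "A \<in> carrier_mat n m" and e: "e \<in> carrier_vec m" and i: "i < n"
  shows "(A *\<^sub>v e) $ i = (\<Sum>j<m. A $$ (i,j) * e $ j)"
proof -
  have "(A *\<^sub>v e) $ i = row A i \<bullet> e" using A i by simp
  also have "\<dots> = (\<Sum>j<m. A $$ (i,j) * e $ j)"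
    using A e i by (simp add: scalar_prod_def row_def lessThan_atLeast0)
  finally show ?thesis .
qed

lemma norm_eq_sum: "(e :: real vec) \<in> carrier_vec n \<Longrightarrow> e \<bullet> e = (\<Sum>k<n. (e $ k)^2)"
  unfolding scalar_prod_def lessThan_atLeast0 by (intro sum.cong) (auto simp: power2_eq_square)

lemma norm_nonneg: "(e :: real vec) \<in> carrier_vec n \<Longrightarrow> 0 \<le> e \<bullet> e"
  by (simp add: norm_eq_sum sum_nonneg)

lemma norm_pos:
  assumes e: "(e :: real vec) \<in> carrier_vec n" and ne: "e \<noteq> 0\<^sub>v n"
  shows "0 < e \<bullet> e"
proof (rule ccontr)
  assume "\<not> 0 < e \<bullet> e"
  hence "(\<Sum>k<n. (e $ k)^2) = 0" using norm_nonneg[OF e] norm_eq_sum[OF e] by simp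
  hence "\<forall>k\<in>{..<n}. (e $ k)^2 = 0" by (subst (asm) sum_nonneg_eq_0_iff) auto
  hence "e = 0\<^sub>v n" using e by (intro eq_vecI) auto
  with ne show False by simp
qed

lemma sym_bil:
  fixes A :: "real mat"
  assumes A: "A \<in> carrier_mat n n" and s: "transpose_mat A = A"
    and x: "x \<in> carrier_vec n" and y: "y \<in> carrier_vec n"
  shows "x \<bullet> (A *\<^sub>v y) = y \<bullet> (A *\<^sub>v x)"
proof -
  have a: "A $$ (i,j) = A $$ (j,i)" if "i < n" "j < n" for i j
    using A that arg_cong[OF s, of "\<lambda>M. M $$ (i,j)"] by simp
  have "x \<bullet> (A *\<^sub>v y) = (\<Sum>i<n. \<Sum>j<n. A $$ (i,j) * x $ i * y $ j)" by (rule quad_expand[OF A y x])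
  also have "\<dots> = (\<Sum>j<n. \<Sum>i<n. A $$ (i,j) * x $ i * y $ j)" by (rule sum.swap)
  also have "\<dots> = (\<Sum>j<n. \<Sum>i<n. A $$ (j,i) * y $ j * x $ i)"
    by (intro sum.cong refl) (simp add: a)
  also have "\<dots> = y \<bullet> (A *\<^sub>v x)" by (rule quad_expand[OF A x y, symmetric])
  finally show ?thesis .
qed

lemma quad_shift:
  fixes A :: "real mat"
  assumes A: "A \<in> carrier_mat n n" and s: "transpose_mat A = A"
    and e: "e \<in> carrier_vec n" and y: "y \<in> carrier_vec n"
  shows "(e + t \<cdot>\<^sub>v y) \<bullet> (A *\<^sub>v (e + t \<cdot>\<^sub>v y))
     = e \<bullet> (A *\<^sub>v e) + 2 * t * (y \<bullet> (A *\<^sub>v e)) + t^2 * (y \<bullet> (A *\<^sub>v y))"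
proof -
  have c: "e + t \<cdot>\<^sub>v y \<in> carrier_vec n" using e y by simp
  have "(e + t \<cdot>\<^sub>v y) \<bullet> (A *\<^sub>v (e + t \<cdot>\<^sub>v y))
     = (\<Sum>i<n. \<Sum>j<n. A $$ (i,j) * (e $ i + t * y $ i) * (e $ j + t * y $ j))"
    using quad_expand[OF A c c] e y by simp
  also have "\<dots> = (\<Sum>i<n. \<Sum>j<n. A $$ (i,j) * e $ i * e $ j)
      + t * (\<Sum>i<n. \<Sum>j<n. A $$ (i,j) * y $ i * e $ j)
      + t * (\<Sum>i<n. \<Sum>j<n. A $$ (i,j) * e $ i * y $ j)
      + t^2 * (\<Sum>i<n. \<Sum>j<n. A $$ (i,j) * y $ i * y $ j)"
    by (simp add: sum_distrib_left sum.distrib[symmetric] algebra_simps power2_eq_square)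
  also have "\<dots> = e \<bullet> (A *\<^sub>v e) + t * (y \<bullet> (A *\<^sub>v e)) + t * (e \<bullet> (A *\<^sub>v y)) + t^2 * (y \<bullet> (A *\<^sub>v y))"
    by (simp add: quad_expand[OF A e e] quad_expand[OF A e y] quad_expand[OF A y e] quad_expand[OF A y y])
  also have "\<dots> = e \<bullet> (A *\<^sub>v e) + 2 * t * (y \<bullet> (A *\<^sub>v e)) + t^2 * (y \<bullet> (A *\<^sub>v y))"
    using sym_bil[OF A s e y] by simp
  finally show ?thesis .
qed

lemma quad_disc:
  fixes a b d :: real
  assumes h: "\<And>t. 0 \<le> d + 2 * t * b + t^2 * a" and a: "0 \<le> a"
  shows "b^2 \<le> a * d"
proof (cases "a = 0")
  case True
  show ?thesis
  proof (rule ccontr)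
    assume "\<not> ?thesis"
    hence b: "b \<noteq> 0" using True by auto
    have "0 \<le> d + 2 * (- (d + 1) / (2 * b)) * b" using h[of "- (d + 1) / (2 * b)"] True by simp
    also have "\<dots> = -1" using b by (simp add: field_simps)
    finally show False by simp
  qed
next
  case False
  hence ap: "0 < a" using a by simp
  have "0 \<le> d + 2 * (- b / a) * b + (- b / a)^2 * a" by (rule h)
  also have "\<dots> = d - b^2 / a" using ap by (simp add: field_simps power2_eq_square)
  finally have "b^2 / a \<le> d" by simp
  thus ?thesis using ap by (simp add: field_simps mult.commute)
qed

lemma psd_cs:
  fixes A :: "real mat"
  assumes A: "A \<in> carrier_mat n n" and s: "transpose_mat A = A"
    and psd: "\<forall>x\<in>carrier_vec n. 0 \<le> x \<bullet> (A *\<^sub>v x)"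
    and e: "e \<in> carrier_vec n" and y: "y \<in> carrier_vec n"
  shows "(y \<bullet> (A *\<^sub>v e))^2 \<le> (y \<bullet> (A *\<^sub>v y)) * (e \<bullet> (A *\<^sub>v e))"
proof (rule quad_disc)
  fix t
  show "0 \<le> e \<bullet> (A *\<^sub>v e) + 2 * t * (y \<bullet> (A *\<^sub>v e)) + t^2 * (y \<bullet> (A *\<^sub>v y))"
    using psd[rule_format, of "e + t \<cdot>\<^sub>v y"] quad_shift[OF A s e y, of t] e y by simp
qed (use psd y in auto)

lemma rayleigh:
  fixes A :: "real mat"
  assumes A: "A \<in> carrier_mat n n" and s: "transpose_mat A = A" and n: "0 < n"
  shows "\<exists>c. eigenvalue A c \<and> (\<forall>e\<in>carrier_vec n. c * (e \<bullet> e) \<le> e \<bullet> (A *\<^sub>v e))"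
proof -
  define K where "K = (\<Sum>i<n. \<Sum>j<n. \<bar>A $$ (i,j)\<bar>)"
  define S where "S = {(e \<bullet> (A *\<^sub>v e)) / (e \<bullet> e) | e. e \<in> carrier_vec n \<and> e \<noteq> 0\<^sub>v n}"
  define c where "c = Inf S"
  have u: "unit_vec n 0 \<noteq> 0\<^sub>v n" using n
    by (metis index_unit_vec(1) index_zero_vec(1) zero_neq_one)
  have Sne: "S \<noteq> {}" unfolding S_def using u unit_vec_carrier by blast
  have Sbdd: "bdd_below S"
  proof (rule bdd_belowI[of _ "- K"])
    fix x assume "x \<in> S"
    then obtain e where e: "e \<in> carrier_vec n" "e \<noteq> 0\<^sub>v n" and x: "x = (e \<bullet> (A *\<^sub>v e)) / (e \<bullet> e)"
      unfolding S_def by auto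
    have p: "0 < e \<bullet> e" by (rule norm_pos[OF e])
    have "- K * (e \<bullet> e) \<le> e \<bullet> (A *\<^sub>v e)" using quad_bound[OF A e(1)] unfolding K_def by linarith
    thus "- K \<le> x" unfolding x using p by (simp add: field_simps)
  qed
  have low: "c * (e \<bullet> e) \<le> e \<bullet> (A *\<^sub>v e)" if e: "e \<in> carrier_vec n" for e
  proof (cases "e = 0\<^sub>v n")
    case True thus ?thesis using A by simp
  next
    case False
    have p: "0 < e \<bullet> e" by (rule norm_pos[OF e False])
    have "c \<le> (e \<bullet> (A *\<^sub>v e)) / (e \<bullet> e)" unfolding c_def
      by (rule cInf_lower[OF _ Sbdd]) (use e False in \<open>auto simp: S_def\<close>)
    thus ?thesis using p by (simp add: field_simps)
  qed
  define B where "B = A - c \<cdot>\<^sub>m 1\<^sub>m n"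
  have B: "B \<in> carrier_mat n n" unfolding B_def using A by simp
  have Bv: "B *\<^sub>v e = A *\<^sub>v e - c \<cdot>\<^sub>v e" if e: "e \<in> carrier_vec n" for e
    unfolding B_def using A e by (subst minus_mult_distrib_mat_vec[of _ n n]) auto
  have Bq: "e \<bullet> (B *\<^sub>v e) = e \<bullet> (A *\<^sub>v e) - c * (e \<bullet> e)" if e: "e \<in> carrier_vec n" for e
    using e A by (simp add: Bv scalar_prod_minus_distrib)
  have Bs: "transpose_mat B = B" unfolding B_def using A s
    by (subst transpose_minus[of _ n n]) auto
  have psd: "\<forall>x\<in>carrier_vec n. 0 \<le> x \<bullet> (B *\<^sub>v x)" using Bq low by simp
  define KB where "KB = (\<Sum>i<n. \<Sum>j<n. \<bar>B $$ (i,j)\<bar>)"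
  have KB0: "0 \<le> KB" unfolding KB_def by (intro sum_nonneg) auto
  have key: "(B *\<^sub>v e) \<bullet> (B *\<^sub>v e) \<le> KB * (e \<bullet> (B *\<^sub>v e))" if e: "e \<in> carrier_vec n" for e
  proof -
    define y where "y = B *\<^sub>v e"
    have y: "y \<in> carrier_vec n" unfolding y_def using B e by simp
    have yy: "y \<bullet> y = y \<bullet> (B *\<^sub>v e)" unfolding y_def ..
    have cs: "(y \<bullet> y)^2 \<le> (y \<bullet> (B *\<^sub>v y)) * (e \<bullet> (B *\<^sub>v e))"
      using psd_cs[OF B Bs psd e y] yy by simp
    also have "\<dots> \<le> (KB * (y \<bullet> y)) * (e \<bullet> (B *\<^sub>v e))"
      using quad_bound[OF B y] psd e unfolding KB_def by (intro mult_right_mono) auto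
    finally have *: "(y \<bullet> y) * (y \<bullet> y) \<le> (y \<bullet> y) * (KB * (e \<bullet> (B *\<^sub>v e)))"
      by (simp add: power2_eq_square algebra_simps)
    show ?thesis
    proof (cases "y \<bullet> y = 0")
      case True thus ?thesis using KB0 psd e unfolding y_def by simp
    next
      case False
      hence "0 < y \<bullet> y" using norm_nonneg[OF y] by simp
      thus ?thesis using * unfolding y_def by simp
    qed
  qed
  have "det B = 0"
  proof (rule ccontr)
    assume d: "det B \<noteq> 0"
    have U: "B \<in> Units (ring_mat TYPE(real) n ())" by (rule det_non_zero_imp_unit[OF B d])
    have "mat_inverse B \<noteq> None" using mat_inverse(1)[OF B, of "()"] U by blast
    then obtain C where Cs: "mat_inverse B = Some C" by auto
    from mat_inverse(2)[OF B Cs] have CB: "C * B = 1\<^sub>m n" and C: "C \<in> carrier_mat n n" by auto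
    define L where "L = (\<Sum>i<n. \<Sum>j<n. \<bar>(transpose_mat C * C) $$ (i,j)\<bar>)"
    have L0: "0 \<le> L" unfolding L_def by (intro sum_nonneg) auto
    have nb: "e \<bullet> e \<le> L * ((B *\<^sub>v e) \<bullet> (B *\<^sub>v e))" if e: "e \<in> carrier_vec n" for e
    proof -
      define w where "w = B *\<^sub>v e"
      have w: "w \<in> carrier_vec n" unfolding w_def using B e by simp
      have ee: "e = C *\<^sub>v w" unfolding w_def using C B e CB
        by (subst assoc_mult_mat_vec[symmetric, of _ n n _ n]) auto
      have "e \<bullet> e = (C *\<^sub>v w) \<bullet> (C *\<^sub>v w)" using ee by simp
      also have "\<dots> = w \<bullet> (transpose_mat C *\<^sub>v (C *\<^sub>v w))"
        using transpose_vec_mult_scalar[of C n n w "C *\<^sub>v w"] C w by (simp add: comm_scalar_prod[of _ n])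
      also have "\<dots> = w \<bullet> ((transpose_mat C * C) *\<^sub>v w)"
        using C w by (subst assoc_mult_mat_vec[of _ n n _ n]) auto
      also have "\<dots> \<le> L * (w \<bullet> w)" using quad_bound[of "transpose_mat C * C" n w] C w
        unfolding L_def by auto
      finally show ?thesis unfolding w_def .
    qed
    define eps where "eps = 1 / (L * KB + 1)"
    have LK0: "0 \<le> L * KB" using L0 KB0 by simp
    have eps: "0 < eps" unfolding eps_def using LK0 by simp
    have "c + eps > Inf S" unfolding c_def using eps by simp
    then obtain x where "x \<in> S" "x < c + eps" using cInf_lessD[OF Sne] unfolding c_def by blast
    then obtain e where e: "e \<in> carrier_vec n" "e \<noteq> 0\<^sub>v n" and xl: "(e \<bullet> (A *\<^sub>v e)) / (e \<bullet> e) < c + eps"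
      unfolding S_def by auto
    have p: "0 < e \<bullet> e" by (rule norm_pos[OF e])
    have small: "e \<bullet> (B *\<^sub>v e) < eps * (e \<bullet> e)" using xl p Bq[OF e(1)] by (simp add: field_simps)
    have "e \<bullet> e \<le> L * (KB * (e \<bullet> (B *\<^sub>v e)))"
      using nb[OF e(1)] key[OF e(1)] L0 by (meson mult_left_mono order_trans)
    also have "\<dots> \<le> (L * KB) * (eps * (e \<bullet> e))"
      using mult_left_mono[OF less_imp_le[OF small] LK0] by (simp add: mult.assoc)
    also have "\<dots> < e \<bullet> e"
    proof -
      have "(L * KB) * eps < 1" unfolding eps_def using LK0 by (simp add: field_simps)
      thus ?thesis using p by (simp add: mult.assoc[symmetric])
    qed
    finally show False by simp
  qed
  then obtain v where v: "v \<in> carrier_vec n" "v \<noteq> 0\<^sub>v n" "B *\<^sub>v v = 0\<^sub>v n"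
    using det_0_iff_vec_prod_zero_field[OF B] by auto
  have "A *\<^sub>v v = c \<cdot>\<^sub>v v"
  proof -
    have "A *\<^sub>v v - c \<cdot>\<^sub>v v = 0\<^sub>v n" using v Bv by simp
    show ?thesis
    proof (rule eq_vecI)
      fix i assume i: "i < dim_vec (c \<cdot>\<^sub>v v)"
      hence i': "i < n" using v by simp
      have "(A *\<^sub>v v - c \<cdot>\<^sub>v v) $ i = 0\<^sub>v n $ i" using \<open>A *\<^sub>v v - c \<cdot>\<^sub>v v = 0\<^sub>v n\<close> by simp
      thus "(A *\<^sub>v v) $ i = (c \<cdot>\<^sub>v v) $ i" using i' A v by simp
    qed (use A v in simp)
  qed
  hence "eigenvalue A c" unfolding eigenvalue_def eigenvector_def using A v by auto
  thus ?thesis using low by blast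
qed

lemma lam_min_le:
  fixes A :: "real mat"
  assumes A: "A \<in> carrier_mat n n" and s: "transpose_mat A = A" and n: "0 < n"
    and e: "e \<in> carrier_vec n"
  shows "lambda_min A * (e \<bullet> e) \<le> e \<bullet> (A *\<^sub>v e)"
proof -
  obtain c where c: "eigenvalue A c" "\<forall>e\<in>carrier_vec n. c * (e \<bullet> e) \<le> e \<bullet> (A *\<^sub>v e)"
    using rayleigh[OF A s n] by blast
  have "lambda_min A \<le> c" unfolding lambda_min_def
    using finite_eigenvalues[OF A] c(1) by (intro Min_le) auto
  hence "lambda_min A * (e \<bullet> e) \<le> c * (e \<bullet> e)" using norm_nonneg[OF e] by (rule mult_right_mono)
  also have "\<dots> \<le> e \<bullet> (A *\<^sub>v e)" using c(2) e by blast
  finally show ?thesis .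
qed

lemma lam_max_ge:
  fixes A :: "real mat"
  assumes A: "A \<in> carrier_mat n n" and s: "transpose_mat A = A" and n: "0 < n"
    and e: "e \<in> carrier_vec n"
  shows "e \<bullet> (A *\<^sub>v e) \<le> lambda_max A * (e \<bullet> e)"
proof -
  have A': "- A \<in> carrier_mat n n" using A by simp
  have s': "transpose_mat (- A) = - A" using s by (simp add: transpose_uminus)
  obtain c where c: "eigenvalue (- A) c" "\<forall>e\<in>carrier_vec n. c * (e \<bullet> e) \<le> e \<bullet> (- A *\<^sub>v e)"
    using rayleigh[OF A' s' n] by blast
  have "eigenvalue A (- c)"
  proof -
    from c(1) obtain v where v: "v \<in> carrier_vec n" "v \<noteq> 0\<^sub>v n" "- A *\<^sub>v v = c \<cdot>\<^sub>v v"
      unfolding eigenvalue_def eigenvector_def using A by auto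
    have "A *\<^sub>v v = (- c) \<cdot>\<^sub>v v"
    proof (rule eq_vecI)
      fix i assume "i < dim_vec ((- c) \<cdot>\<^sub>v v)"
      hence i: "i < n" using v by simp
      have w: "- (A *\<^sub>v v) = c \<cdot>\<^sub>v v" using v(3) A v by simp
      have "(A *\<^sub>v v) $ i = - ((- (A *\<^sub>v v)) $ i)" using A v(1) i by simp
      also have "\<dots> = - ((c \<cdot>\<^sub>v v) $ i)" unfolding w ..
      finally show "(A *\<^sub>v v) $ i = ((- c) \<cdot>\<^sub>v v) $ i" using v i by simp
    qed (use A v in simp)
    thus ?thesis unfolding eigenvalue_def eigenvector_def using A v by auto
  qed
  hence "- c \<le> lambda_max A" unfolding lambda_max_def
    using finite_eigenvalues[OF A] by (intro Max_ge) auto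
  have "e \<bullet> (A *\<^sub>v e) \<le> (- c) * (e \<bullet> e)" using c(2) e A by force
  also have "\<dots> \<le> lambda_max A * (e \<bullet> e)" using \<open>- c \<le> lambda_max A\<close> norm_nonneg[OF e]
    by (rule mult_right_mono)
  finally show ?thesis .
qed

lemma alpha_pow: "alpha ^ k = cis (real k * (- 2 * pi / 3))"
  unfolding alpha_def by (rule DeMoivre)

lemma alpha_re:
  assumes i: "i < 3" and j: "j < 3"
  shows "Re (cnj (alpha ^ i) * alpha ^ j) = (if i = j then 1 else - 1 / 2)"
proof -
  have "cnj (alpha ^ i) * alpha ^ j = cis ((real i - real j) * (2 * pi / 3))"
    unfolding alpha_pow cis_cnj cis_mult by (rule arg_cong[of _ _ cis]) (simp add: field_simps)
  hence r: "Re (cnj (alpha ^ i) * alpha ^ j) = cos ((real i - real j) * (2 * pi / 3))" by simp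
  have c2: "cos (4 * pi / 3) = - 1 / 2"
  proof -
    have "cos (4 * pi / 3) = cos (pi / 3 + pi)" by (rule arg_cong[of _ _ cos]) simp
    also have "\<dots> = - cos (pi / 3)" by (rule cos_periodic_pi)
    finally show ?thesis using cos_60 by simp
  qed
  have "i = 0 \<or> i = 1 \<or> i = 2" "j = 0 \<or> j = 1 \<or> j = 2" using i j by auto
  thus ?thesis unfolding r using cos_120 c2
    by (auto simp: field_simps)
qed

lemma ztil_entry:
  assumes Z: "Zn \<in> carrier_mat 3 3" and i: "i < 3" and j: "j < 3"
  shows "Ztilde Zn $$ (i,j) = cnj (alpha ^ i) * Zn $$ (i,j) * alpha ^ j"
proof -
  have "mat_diag 3 (\<lambda>i. cnj (alpha ^ i)) * Zn = mat 3 3 (\<lambda>(i,j). cnj (alpha ^ i) * Zn $$ (i,j))"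
    by (rule mat_diag_mult_left[OF Z])
  moreover have "mat 3 3 (\<lambda>(i,j). cnj (alpha ^ i) * Zn $$ (i,j)) * mat_diag 3 (\<lambda>i. alpha ^ i)
      = mat 3 3 (\<lambda>(i,j). mat 3 3 (\<lambda>(i,j). cnj (alpha ^ i) * Zn $$ (i,j)) $$ (i,j) * alpha ^ j)"
    by (rule mat_diag_mult_right) simp
  ultimately show ?thesis unfolding Ztilde_def using i j by simp
qed

lemma ztil_sym:
  assumes Z: "Zn \<in> carrier_mat 3 3" and s: "transpose_mat Zn = Zn" and i: "i < 3" and j: "j < 3"
  shows "Im (Ztilde Zn $$ (i,j)) + Im (Ztilde Zn $$ (j,i)) = 2 * Xtilde Zn $$ (i,j)"
proof -
  have zs: "Zn $$ (j,i) = Zn $$ (i,j)"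
    using Z i j arg_cong[OF s, of "\<lambda>M. M $$ (i,j)"] by simp
  define w where "w = cnj (alpha ^ i) * alpha ^ j"
  define z where "z = Zn $$ (i,j)"
  have "Ztilde Zn $$ (i,j) = w * z" unfolding w_def z_def ztil_entry[OF Z i j] by (simp add: algebra_simps)
  moreover have "Ztilde Zn $$ (j,i) = cnj w * z" unfolding w_def z_def ztil_entry[OF Z j i] zs
    by (simp add: algebra_simps)
  moreover have "Im (w * z) + Im (cnj w * z) = 2 * Re w * Im z" by simp
  moreover have "Re w = (if i = j then 1 else - 1 / 2)" unfolding w_def by (rule alpha_re[OF i j])
  ultimately show ?thesis unfolding Xtilde_def z_def using i j by auto
qed

lemma smult_mat_vec':
  fixes A :: "real mat"
  assumes A: "A \<in> carrier_mat n m" and e: "e \<in> carrier_vec m"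
  shows "(c \<cdot>\<^sub>m A) *\<^sub>v e = c \<cdot>\<^sub>v (A *\<^sub>v e)"
proof (rule eq_vecI)
  fix i assume "i < dim_vec (c \<cdot>\<^sub>v (A *\<^sub>v e))"
  hence i: "i < n" using A by simp
  show "((c \<cdot>\<^sub>m A) *\<^sub>v e) $ i = (c \<cdot>\<^sub>v (A *\<^sub>v e)) $ i"
    using mv_index[OF A e i] mv_index[of "c \<cdot>\<^sub>m A" n m e i] A e i
    by (simp add: sum_distrib_left mult.assoc)
qed (use A in simp)

lemma transpose_smult': "transpose_mat (c \<cdot>\<^sub>m A) = c \<cdot>\<^sub>m transpose_mat A"
  by (rule eq_matI) auto

lemma sandwich_quad:
  fixes M B :: "real mat"
  assumes M: "M \<in> carrier_mat n n" and B: "B \<in> carrier_mat n n" and e: "e \<in> carrier_vec n"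
  shows "e \<bullet> ((2 \<cdot>\<^sub>m (M * B * transpose_mat M)) *\<^sub>v e)
       = 2 * ((transpose_mat M *\<^sub>v e) \<bullet> (B *\<^sub>v (transpose_mat M *\<^sub>v e)))"
proof -
  have MB: "M * B \<in> carrier_mat n n" using M B by simp
  have Mt: "transpose_mat M \<in> carrier_mat n n" using M by simp
  have u: "transpose_mat M *\<^sub>v e \<in> carrier_vec n" using Mt e by simp
  have "(M * B * transpose_mat M) *\<^sub>v e = M *\<^sub>v (B *\<^sub>v (transpose_mat M *\<^sub>v e))"
    by (simp only: assoc_mult_mat_vec[OF MB Mt e] assoc_mult_mat_vec[OF M B u])
  moreover have "e \<bullet> (M *\<^sub>v (B *\<^sub>v (transpose_mat M *\<^sub>v e)))
      = (transpose_mat M *\<^sub>v e) \<bullet> (B *\<^sub>v (transpose_mat M *\<^sub>v e))"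
    using transpose_vec_mult_scalar[OF M, of "B *\<^sub>v (transpose_mat M *\<^sub>v e)" e] B u e by simp
  moreover have "(2 \<cdot>\<^sub>m (M * B * transpose_mat M)) *\<^sub>v e = 2 \<cdot>\<^sub>v ((M * B * transpose_mat M) *\<^sub>v e)"
    by (rule smult_mat_vec'[of _ n n]) (use MB Mt e in auto)
  moreover have "M *\<^sub>v (B *\<^sub>v (transpose_mat M *\<^sub>v e)) \<in> carrier_vec n" using M B u by simp
  ultimately show ?thesis using e by simp
qed

lemma sandwich_sym:
  fixes M B :: "real mat"
  assumes M: "M \<in> carrier_mat n n" and B: "B \<in> carrier_mat n n" and s: "transpose_mat B = B"
  shows "transpose_mat (2 \<cdot>\<^sub>m (M * B * transpose_mat M)) = 2 \<cdot>\<^sub>m (M * B * transpose_mat M)"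
proof -
  have MB: "M * B \<in> carrier_mat n n" using M B by simp
  have Mt: "transpose_mat M \<in> carrier_mat n n" using M by simp
  have "transpose_mat (M * B * transpose_mat M) = transpose_mat (transpose_mat M) * transpose_mat (M * B)"
    by (rule transpose_mult[OF MB Mt])
  also have "\<dots> = M * (B * transpose_mat M)"
    using transpose_mult[OF M B] s by simp
  also have "\<dots> = M * B * transpose_mat M" using M B Mt by simp
  finally show ?thesis by (simp add: transpose_smult')
qed

lemma sym_part_quad:
  fixes A S :: "real mat"
  assumes A: "A \<in> carrier_mat n n" and S: "S \<in> carrier_mat n n"
    and h: "\<And>i j. i < n \<Longrightarrow> j < n \<Longrightarrow> A $$ (i,j) + A $$ (j,i) = 2 * S $$ (i,j)"
    and u: "u \<in> carrier_vec n"
  shows "u \<bullet> (A *\<^sub>v u) = u \<bullet> (S *\<^sub>v u)"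
proof -
  have "2 * (u \<bullet> (A *\<^sub>v u)) = (\<Sum>i<n. \<Sum>j<n. A $$ (i,j) * u $ i * u $ j) + (\<Sum>i<n. \<Sum>j<n. A $$ (i,j) * u $ i * u $ j)"
    using quad_expand[OF A u u] by simp
  also have "\<dots> = (\<Sum>i<n. \<Sum>j<n. A $$ (i,j) * u $ i * u $ j) + (\<Sum>i<n. \<Sum>j<n. A $$ (j,i) * u $ j * u $ i)"
    using sum.swap[of "\<lambda>i j. A $$ (i,j) * u $ i * u $ j" "{..<n}" "{..<n}"] by (simp only:)
  also have "\<dots> = (\<Sum>i<n. \<Sum>j<n. A $$ (i,j) * u $ i * u $ j + A $$ (j,i) * u $ j * u $ i)"
    by (simp only: sum.distrib)
  also have "\<dots> = (\<Sum>i<n. \<Sum>j<n. (A $$ (i,j) + A $$ (j,i)) * u $ i * u $ j)"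
    by (intro sum.cong refl) (simp add: algebra_simps)
  also have "\<dots> = (\<Sum>i<n. \<Sum>j<n. 2 * (S $$ (i,j) * u $ i * u $ j))"
    by (intro sum.cong refl) (simp add: h)
  also have "\<dots> = 2 * (u \<bullet> (S *\<^sub>v u))"
    unfolding quad_expand[OF S u u] by (simp only: sum_distrib_left)
  finally show ?thesis by simp
qed

lemma step_norm:
  fixes e w :: "real vec"
  assumes e: "e \<in> carrier_vec n" and w: "w \<in> carrier_vec n"
  shows "(e - mu \<cdot>\<^sub>v w) \<bullet> (e - mu \<cdot>\<^sub>v w) = e \<bullet> e - 2 * mu * (e \<bullet> w) + mu^2 * (w \<bullet> w)"
proof -
  have "(e - mu \<cdot>\<^sub>v w) \<bullet> (e - mu \<cdot>\<^sub>v w) = (\<Sum>i<n. (e $ i - mu * w $ i) * (e $ i - mu * w $ i))"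
    using e w unfolding scalar_prod_def by (simp add: lessThan_atLeast0)
  also have "\<dots> = (\<Sum>i<n. e $ i * e $ i) - 2 * mu * (\<Sum>i<n. e $ i * w $ i) + mu^2 * (\<Sum>i<n. w $ i * w $ i)"
  proof -
    have "(\<Sum>i<n. (e $ i - mu * w $ i) * (e $ i - mu * w $ i))
        = (\<Sum>i<n. e $ i * e $ i - (2 * mu) * (e $ i * w $ i) + mu^2 * (w $ i * w $ i))"
      by (intro sum.cong refl) (simp add: algebra_simps power2_eq_square)
    also have "\<dots> = (\<Sum>i<n. e $ i * e $ i) - (\<Sum>i<n. (2 * mu) * (e $ i * w $ i)) + (\<Sum>i<n. mu^2 * (w $ i * w $ i))"
      by (simp only: sum.distrib sum_subtractf)
    also have "\<dots> = (\<Sum>i<n. e $ i * e $ i) - 2 * mu * (\<Sum>i<n. e $ i * w $ i) + mu^2 * (\<Sum>i<n. w $ i * w $ i)"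
      by (simp only: sum_distrib_left[symmetric])
    finally show ?thesis .
  qed
  also have "\<dots> = e \<bullet> e - 2 * mu * (e \<bullet> w) + mu^2 * (w \<bullet> w)"
    using e w unfolding scalar_prod_def by (simp add: lessThan_atLeast0)
  finally show ?thesis .
qed


theorem proposition5:
  fixes N :: nat and par :: "nat \<Rightarrow> nat" and Z :: "nat \<Rightarrow> complex mat"
    and p :: "real vec" and v0 :: real and \<mu> :: real and q :: "nat \<Rightarrow> real vec"
  assumes tree: "\<forall>n\<in>{1..N}. par n < n"
    and Zdim: "\<forall>n\<in>{1..N}. Z n \<in> carrier_mat 3 3"
    and Zsym: "\<forall>n\<in>{1..N}. transpose_mat (Z n) = Z n"
    and p: "p \<in> carrier_vec (3*N)"
    and q0: "q 0 \<in> carrier_vec (3*N)"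
    and iter: "\<forall>t. q (Suc t) = q t - \<mu> \<cdot>\<^sub>v
        ((2 \<cdot>\<^sub>m (Mmat N par * bdiag N (\<lambda>n. map_mat Re (Ztilde (Z n))) * transpose_mat (Mmat N par))) *\<^sub>v p
         + (2 \<cdot>\<^sub>m (Mmat N par * bdiag N (\<lambda>n. map_mat Im (Ztilde (Z n))) * transpose_mat (Mmat N par))) *\<^sub>v q t
         + vec (3*N) (\<lambda>_. v0) - vec (3*N) (\<lambda>_. v0))"
    and mu_pos: "0 < \<mu>"
    and mu_ub: "\<mu> < 2 * lambda_min (2 \<cdot>\<^sub>m (Mmat N par * bdiag N (\<lambda>n. Xtilde (Z n)) * transpose_mat (Mmat N par)))
        / lambda_max (transpose_mat (2 \<cdot>\<^sub>m (Mmat N par * bdiag N (\<lambda>n. map_mat Im (Ztilde (Z n))) * transpose_mat (Mmat N par)))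
                      * (2 \<cdot>\<^sub>m (Mmat N par * bdiag N (\<lambda>n. map_mat Im (Ztilde (Z n))) * transpose_mat (Mmat N par))))"
  shows "\<exists>qs. qs \<in> carrier_vec (3*N)
     \<and> (let R = 2 \<cdot>\<^sub>m (Mmat N par * bdiag N (\<lambda>n. map_mat Re (Ztilde (Z n))) * transpose_mat (Mmat N par));
            X = 2 \<cdot>\<^sub>m (Mmat N par * bdiag N (\<lambda>n. map_mat Im (Ztilde (Z n))) * transpose_mat (Mmat N par));
            obj = (\<lambda>x. (1/2) * ((R *\<^sub>v p + X *\<^sub>v x) \<bullet> (R *\<^sub>v p + X *\<^sub>v x)))
        in (\<forall>x\<in>carrier_vec (3*N). obj qs \<le> obj x)
         \<and> (\<forall>x\<in>carrier_vec (3*N). (\<forall>y\<in>carrier_vec (3*N). obj x \<le> obj y) \<longrightarrow> x = qs))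
     \<and> (\<forall>i<3*N. (\<lambda>t. q t $ i) \<longlonglongrightarrow> qs $ i)"
proof (cases "N = 0")
  case True
  show ?thesis
  proof (intro exI[of _ "0\<^sub>v 0"] conjI)
    have z: "x = 0\<^sub>v 0" if "x \<in> carrier_vec (3*N)" for x :: "real vec"
      using that True by (intro eq_vecI) auto
    show "0\<^sub>v 0 \<in> carrier_vec (3 * N)" using True by simp
    show "\<forall>i<3 * N. (\<lambda>t. q t $ i) \<longlonglongrightarrow> 0\<^sub>v 0 $ i" using True by simp
    show "let R = 2 \<cdot>\<^sub>m (Mmat N par * bdiag N (\<lambda>n. map_mat Re (Ztilde (Z n))) * transpose_mat (Mmat N par));
            X = 2 \<cdot>\<^sub>m (Mmat N par * bdiag N (\<lambda>n. map_mat Im (Ztilde (Z n))) * transpose_mat (Mmat N par));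
            obj = (\<lambda>x. (1/2) * ((R *\<^sub>v p + X *\<^sub>v x) \<bullet> (R *\<^sub>v p + X *\<^sub>v x)))
        in (\<forall>x\<in>carrier_vec (3*N). obj (0\<^sub>v 0) \<le> obj x)
         \<and> (\<forall>x\<in>carrier_vec (3*N). (\<forall>y\<in>carrier_vec (3*N). obj x \<le> obj y) \<longrightarrow> x = 0\<^sub>v 0)"
      unfolding Let_def using z by auto
  qed
next
  case False
  define n where "n = 3 * N"
  have n: "0 < n" using False unfolding n_def by simp
  define M where "M = Mmat N par"
  define BR where "BR = bdiag N (\<lambda>k. map_mat Re (Ztilde (Z k)))"
  define BI where "BI = bdiag N (\<lambda>k. map_mat Im (Ztilde (Z k)))"
  define BX where "BX = bdiag N (\<lambda>k. Xtilde (Z k))"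
  define R where "R = 2 \<cdot>\<^sub>m (M * BR * transpose_mat M)"
  define X where "X = 2 \<cdot>\<^sub>m (M * BI * transpose_mat M)"
  define Xx where "Xx = 2 \<cdot>\<^sub>m (M * BX * transpose_mat M)"
  have eqs: "2 \<cdot>\<^sub>m (Mmat N par * bdiag N (\<lambda>n. map_mat Re (Ztilde (Z n))) * transpose_mat (Mmat N par)) = R"
    "2 \<cdot>\<^sub>m (Mmat N par * bdiag N (\<lambda>n. map_mat Im (Ztilde (Z n))) * transpose_mat (Mmat N par)) = X"
    "2 \<cdot>\<^sub>m (Mmat N par * bdiag N (\<lambda>n. Xtilde (Z n)) * transpose_mat (Mmat N par)) = Xx"
    "3 * N = n"
    unfolding R_def X_def Xx_def M_def BR_def BI_def BX_def n_def by simp_all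
  have iter': "\<And>t. q (Suc t) = q t - \<mu> \<cdot>\<^sub>v (R *\<^sub>v p + X *\<^sub>v q t + vec n (\<lambda>_. v0) - vec n (\<lambda>_. v0))"
    using iter unfolding eqs by blast
  have mu_ub': "\<mu> < 2 * lambda_min Xx / lambda_max (transpose_mat X * X)"
    using mu_ub unfolding eqs .
  have p': "p \<in> carrier_vec n" using p unfolding n_def .
  have M: "M \<in> carrier_mat n n" unfolding M_def Mmat_def Tmat_def n_def carrier_mat_def by simp
  have BR: "BR \<in> carrier_mat n n" unfolding BR_def bdiag_def n_def by simp
  have BI: "BI \<in> carrier_mat n n" unfolding BI_def bdiag_def n_def by simp
  have BX: "BX \<in> carrier_mat n n" unfolding BX_def bdiag_def n_def by simp
  have R: "R \<in> carrier_mat n n" unfolding R_def using M BR by simp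
  have X: "X \<in> carrier_mat n n" unfolding X_def using M BI by simp
  have Xx: "Xx \<in> carrier_mat n n" unfolding Xx_def using M BX by simp
  have Bsym: "BI $$ (i,j) + BI $$ (j,i) = 2 * BX $$ (i,j)" if ij: "i < n" "j < n" for i j
  proof (cases "i div 3 = j div 3")
    case True
    define k where "k = i div 3 + 1"
    have k: "k \<in> {1..N}" using ij unfolding k_def n_def by auto
    have kj: "j div 3 + 1 = k" using True unfolding k_def by simp
    have Zk: "Z k \<in> carrier_mat 3 3" "transpose_mat (Z k) = Z k" using k Zdim Zsym by auto
    have Zt: "Ztilde (Z k) \<in> carrier_mat 3 3" unfolding Ztilde_def carrier_mat_def mat_diag_def by simp
    have "BI $$ (i,j) = Im (Ztilde (Z k) $$ (i mod 3, j mod 3))"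
      unfolding BI_def bdiag_def using ij True Zt unfolding n_def k_def by auto
    moreover have "BI $$ (j,i) = Im (Ztilde (Z k) $$ (j mod 3, i mod 3))"
      unfolding BI_def bdiag_def using ij True Zt kj unfolding n_def by auto
    moreover have "BX $$ (i,j) = Xtilde (Z k) $$ (i mod 3, j mod 3)"
      unfolding BX_def bdiag_def using ij True unfolding n_def k_def by auto
    ultimately show ?thesis using ztil_sym[OF Zk, of "i mod 3" "j mod 3"] by simp
  next
    case False
    thus ?thesis unfolding BI_def BX_def bdiag_def using ij unfolding n_def by auto
  qed
  have BXs: "transpose_mat BX = BX"
  proof (rule eq_matI)
    fix i j assume "i < dim_row BX" "j < dim_col BX"
    hence ij: "i < n" "j < n" using BX by auto
    show "transpose_mat BX $$ (i,j) = BX $$ (i,j)"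
      using Bsym[OF ij] Bsym[of j i] ij BX by simp
  qed (use BX in auto)
  have Xxs: "transpose_mat Xx = Xx" unfolding Xx_def by (rule sandwich_sym[OF M BX BXs])
  define XTX where "XTX = transpose_mat X * X"
  have XTX: "XTX \<in> carrier_mat n n" unfolding XTX_def using X by simp
  have XTXs: "transpose_mat XTX = XTX" unfolding XTX_def
    using transpose_mult[of "transpose_mat X" n n X n] X by simp
  have quadX: "e \<bullet> (X *\<^sub>v e) = e \<bullet> (Xx *\<^sub>v e)" if e: "e \<in> carrier_vec n" for e
  proof -
    have u: "transpose_mat M *\<^sub>v e \<in> carrier_vec n" using M e by simp
    show ?thesis unfolding X_def Xx_def sandwich_quad[OF M BI e] sandwich_quad[OF M BX e]
      using sym_part_quad[OF BI BX Bsym u] by simp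
  qed
  have normX: "(X *\<^sub>v e) \<bullet> (X *\<^sub>v e) = e \<bullet> (XTX *\<^sub>v e)" if e: "e \<in> carrier_vec n" for e
  proof -
    have "(X *\<^sub>v e) \<bullet> (X *\<^sub>v e) = (transpose_mat X *\<^sub>v (X *\<^sub>v e)) \<bullet> e"
      using transpose_vec_mult_scalar[OF X e, of "X *\<^sub>v e"] X e by simp
    also have "\<dots> = e \<bullet> (transpose_mat X *\<^sub>v (X *\<^sub>v e))"
      using X e by (intro comm_scalar_prod[of _ n]) auto
    also have "\<dots> = e \<bullet> (XTX *\<^sub>v e)" unfolding XTX_def using X e
      by (subst assoc_mult_mat_vec[of _ n n _ n]) auto
    finally show ?thesis .
  qed
  define lmin where "lmin = lambda_min Xx"
  define lmax where "lmax = lambda_max XTX"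
  have lminb: "lmin * (e \<bullet> e) \<le> e \<bullet> (X *\<^sub>v e)" if e: "e \<in> carrier_vec n" for e
    unfolding lmin_def quadX[OF e] by (rule lam_min_le[OF Xx Xxs n e])
  have lmaxb: "(X *\<^sub>v e) \<bullet> (X *\<^sub>v e) \<le> lmax * (e \<bullet> e)" if e: "e \<in> carrier_vec n" for e
    unfolding lmax_def normX[OF e] by (rule lam_max_ge[OF XTX XTXs n e])
  have "0 \<le> lmax"
  proof -
    have u: "unit_vec n 0 \<in> carrier_vec n" by simp
    have "0 \<le> (X *\<^sub>v unit_vec n 0) \<bullet> (X *\<^sub>v unit_vec n 0)" using X by (intro norm_nonneg[of _ n]) simp
    also have "\<dots> \<le> lmax * (unit_vec n 0 \<bullet> unit_vec n 0)" by (rule lmaxb[OF u])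
    also have "unit_vec n 0 \<bullet> (unit_vec n 0 :: real vec) = 1" using n scalar_prod_left_unit[OF u n] by simp
    finally show ?thesis by simp
  qed
  have lmaxp: "0 < lmax"
  proof (rule ccontr)
    assume "\<not> 0 < lmax"
    hence "lmax = 0" using \<open>0 \<le> lmax\<close> by simp
    thus False using mu_ub' mu_pos unfolding lmin_def[symmetric] XTX_def[symmetric] lmax_def[symmetric] by simp
  qed
  have mul: "\<mu> * lmax < 2 * lmin"
    using mu_ub' lmaxp unfolding lmin_def[symmetric] XTX_def[symmetric] lmax_def[symmetric]
    by (simp add: pos_less_divide_eq)
  have lminp: "0 < lmin" using mul mu_pos lmaxp
    by (smt (verit) mult_pos_pos)
  have inj: "v = 0\<^sub>v n" if v: "v \<in> carrier_vec n" and Xv: "X *\<^sub>v v = 0\<^sub>v n" for v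
  proof (rule ccontr)
    assume "v \<noteq> 0\<^sub>v n"
    hence "0 < v \<bullet> v" by (rule norm_pos[OF v])
    moreover have "lmin * (v \<bullet> v) \<le> 0" using lminb[OF v] Xv v by simp
    ultimately show False using lminp by (simp add: mult_le_0_iff)
  qed
  have "det X \<noteq> 0"
    using det_0_iff_vec_prod_zero_field[OF X] inj by blast
  then have U: "X \<in> Units (ring_mat TYPE(real) n ())" by (rule det_non_zero_imp_unit[OF X])
  have "mat_inverse X \<noteq> None" using mat_inverse(1)[OF X, of "()"] U by blast
  then obtain C where Cs: "mat_inverse X = Some C" by auto
  from mat_inverse(2)[OF X Cs] have XC: "X * C = 1\<^sub>m n" and C: "C \<in> carrier_mat n n" by auto
  define qs where "qs = C *\<^sub>v (- (R *\<^sub>v p))"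
  have qsc: "qs \<in> carrier_vec n" unfolding qs_def using C R p' by simp
  have Xqs: "X *\<^sub>v qs = - (R *\<^sub>v p)" unfolding qs_def
    using X C R p' XC by (subst assoc_mult_mat_vec[symmetric, of _ n n _ n]) auto
  have hq: "R *\<^sub>v p + X *\<^sub>v qs = 0\<^sub>v n"
    using Xqs R p' by (intro eq_vecI) auto
  have qc: "q t \<in> carrier_vec n" for t
    by (induction t) (use q0 n_def iter' R X p' in auto)
  define err where "err t = q t - qs" for t
  have errc: "err t \<in> carrier_vec n" for t unfolding err_def using qc qsc by simp
  have errS: "err (Suc t) = err t - \<mu> \<cdot>\<^sub>v (X *\<^sub>v err t)" for t
  proof (rule eq_vecI)
    fix i assume "i < dim_vec (err t - \<mu> \<cdot>\<^sub>v (X *\<^sub>v err t))"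
    hence i: "i < n" using X by simp
    have Xe: "X *\<^sub>v err t = X *\<^sub>v q t - X *\<^sub>v qs" unfolding err_def
      by (rule mult_minus_distrib_mat_vec[OF X qc qsc])
    have "(X *\<^sub>v qs) $ i = (- (R *\<^sub>v p)) $ i" using Xqs by simp
    also have "\<dots> = - ((R *\<^sub>v p) $ i)" using i R by simp
    finally have "(R *\<^sub>v p) $ i = - ((X *\<^sub>v qs) $ i)" by simp
    thus "err (Suc t) $ i = (err t - \<mu> \<cdot>\<^sub>v (X *\<^sub>v err t)) $ i"
      unfolding Xe using i X R p' qc[of t] qsc unfolding err_def iter'[of t] by (simp add: algebra_simps)
  qed (use X errc in simp)
  define rho where "rho = max (1 - 2 * \<mu> * lmin + \<mu>^2 * lmax) 0"
  have rho0: "0 \<le> rho" and rho1: "rho < 1"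
  proof -
    have "0 < \<mu> * (2 * lmin - \<mu> * lmax)" using mu_pos mul by simp
    thus "rho < 1" unfolding rho_def by (simp add: algebra_simps power2_eq_square)
  qed (simp add: rho_def)
  have contr: "err (Suc t) \<bullet> err (Suc t) \<le> rho * (err t \<bullet> err t)" for t
  proof -
    let ?e = "err t"
    have ec: "?e \<in> carrier_vec n" by (rule errc)
    have w: "X *\<^sub>v ?e \<in> carrier_vec n" using X ec by simp
    have "err (Suc t) \<bullet> err (Suc t) = ?e \<bullet> ?e - 2 * \<mu> * (?e \<bullet> (X *\<^sub>v ?e)) + \<mu>^2 * ((X *\<^sub>v ?e) \<bullet> (X *\<^sub>v ?e))"
      unfolding errS by (rule step_norm[OF ec w])
    also have "\<dots> \<le> ?e \<bullet> ?e - 2 * \<mu> * (lmin * (?e \<bullet> ?e)) + \<mu>^2 * (lmax * (?e \<bullet> ?e))"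
      using lminb[OF ec] lmaxb[OF ec] mu_pos
      by (intro add_mono diff_mono order_refl mult_left_mono) auto
    also have "\<dots> = (1 - 2 * \<mu> * lmin + \<mu>^2 * lmax) * (?e \<bullet> ?e)" by (simp add: algebra_simps)
    also have "\<dots> \<le> rho * (?e \<bullet> ?e)" unfolding rho_def
      using norm_nonneg[OF ec] by (intro mult_right_mono) auto
    finally show ?thesis .
  qed
  have decay: "err t \<bullet> err t \<le> rho ^ t * (err 0 \<bullet> err 0)" for t
  proof (induction t)
    case 0 thus ?case by simp
  next
    case (Suc t)
    have "err (Suc t) \<bullet> err (Suc t) \<le> rho * (err t \<bullet> err t)" by (rule contr)
    also have "\<dots> \<le> rho * (rho ^ t * (err 0 \<bullet> err 0))" using Suc rho0 by (rule mult_left_mono)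
    finally show ?case by (simp add: mult.assoc)
  qed
  have conv: "(\<lambda>t. q t $ i) \<longlonglongrightarrow> qs $ i" if i: "i < n" for i
  proof -
    have lim0: "(\<lambda>t. rho ^ t * (err 0 \<bullet> err 0)) \<longlonglongrightarrow> 0"
      using rho0 rho1 by (intro tendsto_mult_left_zero LIMSEQ_power_zero) auto
    have sq: "(\<lambda>t. (err t $ i)^2) \<longlonglongrightarrow> 0"
    proof (rule tendsto_sandwich[OF _ _ tendsto_const lim0])
      show "\<forall>\<^sub>F t in sequentially. 0 \<le> (err t $ i)^2" by simp
      show "\<forall>\<^sub>F t in sequentially. (err t $ i)^2 \<le> rho ^ t * (err 0 \<bullet> err 0)"
        using sq_le_norm[OF errc i] decay order_trans by (intro always_eventually) blast
    qed
    have "(\<lambda>t. sqrt ((err t $ i)^2)) \<longlonglongrightarrow> sqrt 0" by (rule tendsto_real_sqrt[OF sq])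
    hence "(\<lambda>t. \<bar>err t $ i\<bar>) \<longlonglongrightarrow> 0" by simp
    hence e0: "(\<lambda>t. err t $ i) \<longlonglongrightarrow> 0" by (simp add: tendsto_rabs_zero_iff)
    have "(\<lambda>t. err t $ i + qs $ i) \<longlonglongrightarrow> 0 + qs $ i" by (intro tendsto_add e0 tendsto_const)
    moreover have "err t $ i + qs $ i = q t $ i" for t unfolding err_def using i qc[of t] qsc by simp
    ultimately show ?thesis by simp
  qed
  define obj where "obj x = (1/2) * ((R *\<^sub>v p + X *\<^sub>v x) \<bullet> (R *\<^sub>v p + X *\<^sub>v x))" for x
  have objq: "obj qs = 0" unfolding obj_def hq by simp
  have obj0: "0 \<le> obj x" if "x \<in> carrier_vec n" for x
    unfolding obj_def using that R X p' by (intro mult_nonneg_nonneg norm_nonneg[of _ n]) auto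
  have uniq: "x = qs" if x: "x \<in> carrier_vec n" and mn: "\<forall>y\<in>carrier_vec n. obj x \<le> obj y" for x
  proof -
    have w: "R *\<^sub>v p + X *\<^sub>v x \<in> carrier_vec n" using R X p' x by simp
    have "obj x \<le> 0" using mn qsc objq by force
    hence "(R *\<^sub>v p + X *\<^sub>v x) \<bullet> (R *\<^sub>v p + X *\<^sub>v x) \<le> 0" unfolding obj_def by simp
    hence w0: "R *\<^sub>v p + X *\<^sub>v x = 0\<^sub>v n" using norm_pos[OF w] by fastforce
    have "X *\<^sub>v (x - qs) = X *\<^sub>v x - X *\<^sub>v qs" by (rule mult_minus_distrib_mat_vec[OF X x qsc])
    also have "\<dots> = 0\<^sub>v n"
    proof (rule eq_vecI)
      fix i assume "i < dim_vec (0\<^sub>v n :: real vec)"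
      hence i: "i < n" by simp
      have a: "(R *\<^sub>v p) $ i + (X *\<^sub>v x) $ i = 0" using arg_cong[OF w0, of "\<lambda>v. v $ i"] i R X by simp
      have b: "(R *\<^sub>v p) $ i + (X *\<^sub>v qs) $ i = 0" using arg_cong[OF hq, of "\<lambda>v. v $ i"] i R X by simp
      show "(X *\<^sub>v x - X *\<^sub>v qs) $ i = 0\<^sub>v n $ i" using a b i X by simp
    qed (use X in simp)
    finally have Xd: "X *\<^sub>v (x - qs) = 0\<^sub>v n" .
    have d: "x - qs \<in> carrier_vec n" using x qsc by simp
    have z: "x - qs = 0\<^sub>v n" by (rule inj[OF d Xd])
    show "x = qs"
    proof (rule eq_vecI)
      fix i assume "i < dim_vec qs"
      hence i: "i < n" using qsc by simp
      have "(x - qs) $ i = 0" using z i by simp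
      thus "x $ i = qs $ i" using i qsc by simp
    qed (use x qsc in simp)
  qed
  show ?thesis
  proof (intro exI[of _ qs] conjI)
    show "qs \<in> carrier_vec (3 * N)" using qsc n_def by simp
    show "\<forall>i<3 * N. (\<lambda>t. q t $ i) \<longlonglongrightarrow> qs $ i" using conv n_def by simp
    show "let R = 2 \<cdot>\<^sub>m (Mmat N par * bdiag N (\<lambda>n. map_mat Re (Ztilde (Z n))) * transpose_mat (Mmat N par));
            X = 2 \<cdot>\<^sub>m (Mmat N par * bdiag N (\<lambda>n. map_mat Im (Ztilde (Z n))) * transpose_mat (Mmat N par));
            obj = (\<lambda>x. (1/2) * ((R *\<^sub>v p + X *\<^sub>v x) \<bullet> (R *\<^sub>v p + X *\<^sub>v x)))
        in (\<forall>x\<in>carrier_vec (3*N). obj qs \<le> obj x)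
         \<and> (\<forall>x\<in>carrier_vec (3*N). (\<forall>y\<in>carrier_vec (3*N). obj x \<le> obj y) \<longrightarrow> x = qs)"
      unfolding Let_def eqs obj_def[symmetric] using objq obj0 uniq by auto
  qed
qed

end
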